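(* Let $\theta=q/r$ with $q,r$ coprime positive integers and let $(U,V)$ be an irreducible finite-dimensional unitary representation of $\mathcal A_\theta$ on $\mathcal H$. Then every irreducible finite-dimensional representation of $\mathcal A_\theta$ is unitarily equivalent to $(sU,tV)$ for some $s,t\in S^1$ (so the irreducible representations are indexed by points of a 2-torus), and all the bundles $\mathcal E_\pi$ associated with irreducible finite-dimensional representations $\pi$ of $\mathcal A_\theta$ are isomorphic as topological complex vector bundles over $\mathbb C/\Lambda$.
   Context: Let $\tau\in\mathbb C$ with $\mathrm{Im}\,\tau>0$, $\Lambda=\mathbb Z+\tau\mathbb Z$, $\theta>0$, $\alpha:=\pi\theta/\mathrm{Im}\,\tau$. $\mathcal A_\theta$ is the noncommutative torus generated by unitaries $u,v$ with $vu=e^{2\pi i\theta}uv$. For a representation $\pi$ of $\mathcal A_\theta$ on a finite-dimensional Hilbert space $\mathcal H_\pi$ and $\gamma=n+\tau m\in\Lambda$, set $J^\pi_\gamma(z)=\exp(\alpha(z\bar\gamma+\frac12|\gamma|^2))e^{\pi i\theta nm}\pi(u)^{-n}\pi(v)^{-m}$; $\mathcal E_\pi\to\mathbb C/\Lambda$ is the holomorphic vector bundle whose smooth (resp. holomorphic) sections are smooth (resp. holomorphic) maps $s:\mathbb C\to\mathcal H_\pi$ with $s(z+\gamma)=J^\pi_\gamma(z)s(z)$ for all $\gamma\in\Lambda$. *)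

theory Defs
  imports "HOL-Analysis.Analysis"
begin

text \<open>Finite-dimensional Hilbert spaces are modelled as complex^'n (standard inner product);
linear maps as matrices complex^'n^'m (mapping complex^'n to complex^'m via *v).\<close>

definition cadj :: "complex^'n^'m \<Rightarrow> complex^'m^'n" where
  "cadj A = (\<chi> i j. cnj (A $ j $ i))"

definition cscale :: "complex \<Rightarrow> complex^'n^'m \<Rightarrow> complex^'n^'m" where
  "cscale c A = (\<chi> i j. c * A $ i $ j)"

definition unitary_map :: "complex^'n^'m \<Rightarrow> bool" where
  "unitary_map W \<longleftrightarrow> W ** cadj W = mat 1 \<and> cadj W ** W = mat 1"

primrec mpow :: "complex^'n^'n \<Rightarrow> nat \<Rightarrow> complex^'n^'n" where
  "mpow A 0 = mat 1"
| "mpow A (Suc k) = A ** mpow A k"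

definition mpow_int :: "complex^'n^'n \<Rightarrow> int \<Rightarrow> complex^'n^'n" where
  "mpow_int A k = (if 0 \<le> k then mpow A (nat k) else mpow (matrix_inv A) (nat (- k)))"

text \<open>A (unital *-)representation of the noncommutative torus A_theta on complex^'n:
unitaries pi(u)=U, pi(v)=V with V U = e^(2 pi i theta) U V.\<close>
definition is_rep :: "real \<Rightarrow> complex^'n^'n \<Rightarrow> complex^'n^'n \<Rightarrow> bool" where
  "is_rep \<theta> U V \<longleftrightarrow> unitary_map U \<and> unitary_map V \<and>
     V ** U = cscale (exp (2 * pi * \<i> * of_real \<theta>)) (U ** V)"

definition csubspace :: "(complex^'n) set \<Rightarrow> bool" where
  "csubspace S \<longleftrightarrow> 0 \<in> S \<and> (\<forall>x\<in>S. \<forall>y\<in>S. x + y \<in> S) \<and> (\<forall>c::complex. \<forall>x\<in>S. c *s x \<in> S)"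

definition irreducible_rep :: "real \<Rightarrow> complex^'n^'n \<Rightarrow> complex^'n^'n \<Rightarrow> bool" where
  "irreducible_rep \<theta> U V \<longleftrightarrow> is_rep \<theta> U V \<and>
     (\<forall>S. csubspace S \<and> (\<forall>x\<in>S. U *v x \<in> S \<and> V *v x \<in> S) \<longrightarrow> S = {0} \<or> S = UNIV)"

definition unit_equiv :: "complex^'n^'n \<Rightarrow> complex^'n^'n \<Rightarrow> complex^'m^'m \<Rightarrow> complex^'m^'m \<Rightarrow> bool" where
  "unit_equiv U V U' V' \<longleftrightarrow> (\<exists>W :: complex^'n^'m. unitary_map W \<and>
      U' = W ** U ** cadj W \<and> V' = W ** V ** cadj W)"

definition Jfac :: "real \<Rightarrow> complex \<Rightarrow> complex^'n^'n \<Rightarrow> complex^'n^'n \<Rightarrow> int \<Rightarrow> int \<Rightarrow> complex \<Rightarrow> complex^'n^'n" where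
  "Jfac \<theta> \<tau> U V n m z =
     (let \<gamma> = of_int n + \<tau> * of_int m; \<alpha> = pi * \<theta> / Im \<tau> in
      cscale (exp (of_real \<alpha> * (z * cnj \<gamma> + of_real ((cmod \<gamma>)\<^sup>2 / 2)))
              * exp (of_real (pi * \<theta>) * \<i> * of_int n * of_int m))
             (mpow_int U (- n) ** mpow_int V (- m)))"

text \<open>Isomorphism of the topological complex vector bundles E_pi, E_pi' over C/Lambda defined by
the factors of automorphy: a continuous family of invertible linear maps Phi(z): H_pi \<rightarrow> H_pi'
intertwining the factors, Phi(z+gamma) J^pi_gamma(z) = J^pi'_gamma(z) Phi(z).\<close>
definition bundle_iso :: "real \<Rightarrow> complex \<Rightarrow> complex^'n^'n \<Rightarrow> complex^'n^'n \<Rightarrow> complex^'m^'m \<Rightarrow> complex^'m^'m \<Rightarrow> bool" where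
  "bundle_iso \<theta> \<tau> U V U' V' \<longleftrightarrow> (\<exists>\<Phi> :: complex \<Rightarrow> complex^'n^'m.
     continuous_on UNIV \<Phi> \<and> (\<forall>z. invertible (\<Phi> z)) \<and>
     (\<forall>n m z. \<Phi> (z + of_int n + \<tau> * of_int m) ** Jfac \<theta> \<tau> U V n m z
              = Jfac \<theta> \<tau> U' V' n m z ** \<Phi> z))"

end

theory Submission imports Defs "Jordan_Normal_Form.Spectral_Radius" begin

lemma eigen_exists_aux:
  fixes A :: "complex^'n^'n"
  shows "\<exists>k x. x \<noteq> 0 \<and> A *v x = k *s x"
proof -
  define n where "n = CARD('n)"
  have n0: "n > 0" unfolding n_def by simp
  obtain f where f: "bij_betw f {0..<n} (UNIV::'n set)"
    using ex_bij_betw_nat_finite[of "UNIV::'n set"] unfolding n_def by auto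
  define B where "B = Matrix.mat n n (\<lambda>(i,j). A $ f i $ f j)"
  have B: "B \<in> carrier_mat n n" unfolding B_def by simp
  from spectrum_non_empty[OF B n0] obtain k where "eigenvalue B k" unfolding spectrum_def by auto
  then obtain v where ev: "eigenvector B v k" unfolding eigenvalue_def by auto
  hence vc: "v \<in> carrier_vec n" and v0: "v \<noteq> 0\<^sub>v n" and Bv: "B *\<^sub>v v = k \<cdot>\<^sub>v v"
    unfolding eigenvector_def using B by auto
  define g where "g = inv_into {0..<n} f"
  have gf: "g (f i) = i" if "i < n" for i
    unfolding g_def using f that by (simp add: bij_betw_def inv_into_f_f)
  have fg: "f (g j) = j" for j
    unfolding g_def using f by (meson UNIV_I bij_betw_inv_into_right)
  have gn: "g j < n" for j
    unfolding g_def using f by (metis UNIV_I atLeastLessThan_iff bij_betw_def inv_into_into)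
  define x :: "complex^'n" where "x = (\<chi> j. Matrix.vec_index v (g j))"
  have "x \<noteq> 0"
  proof
    assume "x = 0"
    hence "Matrix.vec_index v i = 0" if "i < n" for i
      using that gf[OF that] unfolding x_def by (metis vec_lambda_beta zero_index)
    hence "v = 0\<^sub>v n" using vc by (intro eq_vecI) auto
    with v0 show False by simp
  qed
  moreover have "A *v x = k *s x"
  unfolding Finite_Cartesian_Product.vec_eq_iff proof (rule allI)
    fix j :: 'n
    have i: "g j < n" by (rule gn)
    have "(A *v x) $ j = (\<Sum>l\<in>UNIV. A $ j $ l * x $ l)" by (simp add: matrix_vector_mult_def)
    also have "\<dots> = (\<Sum>i\<in>{0..<n}. A $ j $ f i * x $ f i)"
      using sum.reindex_bij_betw[OF f, of "\<lambda>l. A $ j $ l * x $ l"] by simp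
    also have "\<dots> = (\<Sum>i\<in>{0..<n}. A $ f (g j) $ f i * Matrix.vec_index v i)"
      by (rule sum.cong) (auto simp: x_def gf fg)
    also have "\<dots> = Matrix.vec_index (B *\<^sub>v v) (g j)"
      using i vc B by (simp add: B_def scalar_prod_def row_def)
    also have "\<dots> = k * x $ j" using Bv i vc by (simp add: x_def)
    finally show "(A *v x) $ j = (k *s x) $ j" by simp
  qed
  ultimately show ?thesis by blast
qed

hide_const (open) Matrix.mat Matrix.vec Matrix.row Matrix.col Determinant.det

lemmas cvec_eq_iff = Finite_Cartesian_Product.vec_eq_iff
lemmas cmat_def = Finite_Cartesian_Product.mat_def

definition cinner :: "complex^'n \<Rightarrow> complex^'n \<Rightarrow> complex" where
  "cinner x y = (\<Sum>i\<in>UNIV. cnj (x $ i) * y $ i)"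

lemma eigen_exists:
  fixes A :: "complex^'n^'n"
  obtains k x where "x \<noteq> 0" "A *v x = k *s x"
  using eigen_exists_aux[of A] by blast

lemma cscale_mult_vec: "cscale c A *v x = c *s (A *v x)"
  by (simp add: cscale_def matrix_vector_mult_def cvec_eq_iff sum_distrib_left mult.assoc)

lemma mult_vec_scale: "(A::complex^'n^'m) *v (c *s x) = c *s (A *v x)"
  by (simp add: matrix_vector_mult_def cvec_eq_iff sum_distrib_left algebra_simps)

lemma mult_vec_add: "(A::complex^'n^'m) *v (x + y) = A *v x + A *v y"
  by (simp add: matrix_vector_mult_def cvec_eq_iff sum.distrib algebra_simps)

lemma mult_vec_zero: "(A::complex^'n^'m) *v 0 = 0"
  by (simp add: matrix_vector_mult_def cvec_eq_iff)

lemma mult_vec_sum: "finite S \<Longrightarrow> (A::complex^'n^'m) *v (\<Sum>j\<in>S. f j) = (\<Sum>j\<in>S. A *v f j)"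
  by (induction S rule: finite_induct) (auto simp: mult_vec_add mult_vec_zero)

lemma cscale_mult_left: "cscale c A ** B = cscale c (A ** B)"
  by (simp add: cscale_def matrix_matrix_mult_def cvec_eq_iff sum_distrib_left mult.assoc)

lemma cscale_mult_right: "A ** cscale c B = cscale c (A ** B)"
  by (simp add: cscale_def matrix_matrix_mult_def cvec_eq_iff sum_distrib_left algebra_simps)

lemma cscale_cscale: "cscale c (cscale d A) = cscale (c*d) A"
  by (simp add: cscale_def cvec_eq_iff)

lemma cscale_one: "cscale 1 A = A"
  by (simp add: cscale_def cvec_eq_iff)

lemma cadj_cadj: "cadj (cadj A) = A"
  by (simp add: cadj_def cvec_eq_iff)

lemma cadj_mult: "cadj (A ** B) = cadj B ** cadj A"
  by (simp add: cadj_def matrix_matrix_mult_def cvec_eq_iff mult.commute)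

lemma cadj_cscale: "cadj (cscale c A) = cscale (cnj c) (cadj A)"
  by (simp add: cadj_def cscale_def cvec_eq_iff)

lemma cadj_mat1: "cadj (mat 1 :: complex^'n^'n) = mat 1"
  by (simp add: cadj_def cmat_def cvec_eq_iff)

lemma cinner_adj: "cinner (A *v x) y = cinner x (cadj A *v y)"
proof -
  have "cinner (A *v x) y = (\<Sum>i\<in>UNIV. \<Sum>j\<in>UNIV. cnj (A$i$j) * cnj (x$j) * y$i)"
    by (simp add: cinner_def matrix_vector_mult_def sum_distrib_right)
  also have "\<dots> = (\<Sum>j\<in>UNIV. \<Sum>i\<in>UNIV. cnj (A$i$j) * cnj (x$j) * y$i)"
    by (rule sum.swap)
  also have "\<dots> = cinner x (cadj A *v y)"
    by (simp add: cinner_def matrix_vector_mult_def cadj_def sum_distrib_left algebra_simps)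
  finally show ?thesis .
qed

lemma cinner_scale_right: "cinner x (c *s y) = c * cinner x y"
  by (simp add: cinner_def sum_distrib_left algebra_simps)

lemma cinner_scale_left: "cinner (c *s x) y = cnj c * cinner x y"
  by (simp add: cinner_def sum_distrib_left algebra_simps)

lemma cinner_add_right: "cinner x (y + z) = cinner x y + cinner x z"
  by (simp add: cinner_def sum.distrib algebra_simps)

lemma cinner_zero_right: "cinner x 0 = 0"
  by (simp add: cinner_def)

lemma cinner_sum_right: "finite S \<Longrightarrow> cinner x (\<Sum>j\<in>S. f j) = (\<Sum>j\<in>S. cinner x (f j))"
  by (induction S rule: finite_induct) (auto simp: cinner_add_right cinner_zero_right)

lemma cinner_cnj: "cinner y x = cnj (cinner x y)"
  by (simp add: cinner_def mult.commute)

lemma unitary_cinner: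
  assumes "unitary_map U" shows "cinner (U *v x) (U *v y) = cinner x y"
  using assms by (simp add: cinner_adj unitary_map_def matrix_vector_mul_assoc)

lemma cinner_self: "cinner x x = complex_of_real ((norm x)^2)"
proof -
  have "cinner x x = (\<Sum>i\<in>UNIV. complex_of_real ((norm (x$i))^2))"
    unfolding cinner_def by (rule sum.cong) (simp, subst complex_norm_square, rule mult.commute)
  also have "\<dots> = complex_of_real ((norm x)^2)"
  proof -
    have "(norm x)^2 = (\<Sum>i\<in>UNIV. (norm (x$i))^2)" by (simp add: norm_vec_def L2_set_def sum_nonneg)
    thus ?thesis by (simp only: of_real_sum)
  qed
  finally show ?thesis .
qed

lemma cinner_self_eq0: "cinner x x = 0 \<longleftrightarrow> x = 0"
  by (simp add: cinner_self)

definition onb :: "nat \<Rightarrow> (nat \<Rightarrow> complex^'n) \<Rightarrow> bool" where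
  "onb r e \<longleftrightarrow> (\<forall>i<r. \<forall>j<r. cinner (e i) (e j) = (if i = j then 1 else 0)) \<and>
     (\<forall>y. \<exists>c. y = (\<Sum>j<r. c j *s e j))"

lemma onb_coeff:
  assumes "onb r e" "j < r"
  shows "cinner (e j) (\<Sum>k<r. c k *s e k) = c j"
proof -
  have "cinner (e j) (\<Sum>k<r. c k *s e k) = (\<Sum>k<r. c k * cinner (e j) (e k))"
    by (simp add: cinner_sum_right cinner_scale_right)
  also have "\<dots> = (\<Sum>k<r. if k = j then c k else 0)"
    by (rule sum.cong) (use assms in \<open>auto simp: onb_def\<close>)
  also have "\<dots> = c j" using assms(2) by simp
  finally show ?thesis .
qed

lemma onb_expand:
  assumes "onb r e" shows "y = (\<Sum>j<r. cinner (e j) y *s e j)"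
proof -
  obtain c where c: "y = (\<Sum>j<r. c j *s e j)" using assms unfolding onb_def by blast
  show ?thesis
    by (subst (2) c, subst c, rule sum.cong) (auto simp: onb_coeff[OF assms])
qed

lemma onb_matrix_eq:
  assumes "onb r e" "\<And>j. j < r \<Longrightarrow> (A::complex^'n^'m) *v e j = B *v e j"
  shows "A = B"
proof (subst matrix_eq, rule allI)
  fix y
  have "A *v y = A *v (\<Sum>j<r. cinner (e j) y *s e j)" using onb_expand[OF assms(1)] by metis
  also have "\<dots> = (\<Sum>j<r. cinner (e j) y *s (A *v e j))" by (simp add: mult_vec_sum mult_vec_scale)
  also have "\<dots> = (\<Sum>j<r. cinner (e j) y *s (B *v e j))" using assms(2) by simp
  also have "\<dots> = B *v (\<Sum>j<r. cinner (e j) y *s e j)" by (simp add: mult_vec_sum mult_vec_scale)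
  also have "\<dots> = B *v y" using onb_expand[OF assms(1)] by metis
  finally show "A *v y = B *v y" .
qed

definition outer :: "nat \<Rightarrow> (nat \<Rightarrow> complex^'m) \<Rightarrow> (nat \<Rightarrow> complex^'n) \<Rightarrow> complex^'n^'m" where
  "outer r f e = (\<chi> a c. \<Sum>j<r. f j $ a * cnj (e j $ c))"

lemma outer_mult: "outer r f e *v y = (\<Sum>j<r. cinner (e j) y *s f j)"
proof -
  have "(outer r f e *v y) $ a = (\<Sum>j<r. cinner (e j) y * f j $ a)" for a
  proof -
    have "(outer r f e *v y) $ a = (\<Sum>c\<in>UNIV. \<Sum>j<r. f j $ a * cnj (e j $ c) * y $ c)"
      by (simp add: outer_def matrix_vector_mult_def sum_distrib_right)
    also have "\<dots> = (\<Sum>j<r. \<Sum>c\<in>UNIV. f j $ a * cnj (e j $ c) * y $ c)" by (rule sum.swap)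
    also have "\<dots> = (\<Sum>j<r. cinner (e j) y * f j $ a)"
      by (simp add: cinner_def sum_distrib_right sum_distrib_left algebra_simps)
    finally show ?thesis .
  qed
  thus ?thesis by (simp add: cvec_eq_iff sum_component)
qed

lemma cadj_outer: "cadj (outer r f e) = outer r e f"
  by (simp add: cadj_def outer_def cvec_eq_iff mult.commute)

lemma outer_basis:
  assumes "onb r e" "k < r" shows "outer r f e *v e k = f k"
proof -
  have "outer r f e *v e k = (\<Sum>j<r. (if j = k then f j else 0))"
    unfolding outer_mult by (rule sum.cong) (use assms in \<open>auto simp: onb_def\<close>)
  thus ?thesis using assms by simp
qed

lemma outer_unitary:
  assumes "onb r e" "onb r f" shows "unitary_map (outer r f e)"
  unfolding unitary_map_def
proof
  show "outer r f e ** cadj (outer r f e) = mat 1"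
    by (rule onb_matrix_eq[OF assms(2)])
       (simp add: cadj_outer matrix_vector_mul_assoc[symmetric] outer_basis assms)
  show "cadj (outer r f e) ** outer r f e = mat 1"
    by (rule onb_matrix_eq[OF assms(1)])
       (simp add: cadj_outer matrix_vector_mul_assoc[symmetric] outer_basis assms)
qed

lemma conj_intertwine:
  assumes "unitary_map W" "W ** A = B ** W" shows "B = W ** A ** cadj W"
proof -
  have "W ** A ** cadj W = B ** (W ** cadj W)" using assms(2) by (simp add: matrix_mul_assoc)
  thus ?thesis using assms(1) by (simp add: unitary_map_def)
qed

lemma cnj_exp_lemma: "cnj (exp (2 * pi * \<i> * of_real t)) = exp (- (2 * pi * \<i> * of_real t))"
  by (simp add: exp_cnj)

lemma mu_pow:
  fixes q r :: nat
  assumes "r > 0" "coprime q r" "k < r"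
  shows "(cnj (exp (2 * pi * \<i> * of_real (real q / real r))))^k = 1 \<longleftrightarrow> k = 0"
proof -
  have e: "(cnj (exp (2 * pi * \<i> * of_real (real q / real r))))^k
      = exp (of_nat k * (- (2 * pi * \<i> * of_real (real q / real r))))"
    by (simp only: exp_of_nat_mult cnj_exp_lemma)
  show ?thesis
  proof
    assume "(cnj (exp (2 * pi * \<i> * of_real (real q / real r))))^k = 1"
    then obtain n :: int where n: "- (real k * (2 * pi * (real q / real r))) = of_int (2 * n) * pi"
      unfolding e exp_eq_1 by auto
    hence h: "(- (real k * (real q / real r))) * (2 * pi) = of_int n * (2 * pi)"
      by (simp add: algebra_simps)
    have c: "2 * pi \<noteq> (0::real)" by simp
    from h have n1: "- (real k * (real q / real r)) = of_int n"
      by (rule iffD1[OF mult_right_cancel[OF c]])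
    have "- (real k * real q) = -(real k * (real q / real r)) * real r" using assms(1) by simp
    also have "\<dots> = of_int n * real r" using n1 by simp
    finally have "real_of_int (- (int k * int q)) = real_of_int (n * int r)" by simp
    hence eq: "- (int k * int q) = n * int r" by (simp only: of_int_eq_iff)
    have "int k * int q = int r * (- n)" using eq by (simp add: algebra_simps)
    hence "int r dvd int (k * q)" unfolding dvd_def by (simp only: of_nat_mult) blast
    hence "r dvd k * q" by (simp only: int_dvd_int_iff)
    moreover have "coprime r q" using assms(2) by (simp add: coprime_commute)
    ultimately have "r dvd k" by (simp add: coprime_dvd_mult_left_iff)
    thus "k = 0" using assms(3) by (cases "k = 0") (auto dest: dvd_imp_le)
  qed simp
qed

lemma mu_pow_r:
  fixes q r :: nat
  assumes "r > 0"
  shows "(cnj (exp (2 * pi * \<i> * of_real (real q / real r))))^r = 1"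
proof -
  have "(cnj (exp (2 * pi * \<i> * of_real (real q / real r))))^r
      = exp (of_nat r * (- (2 * pi * \<i> * of_real (real q / real r))))"
    by (simp only: exp_of_nat_mult cnj_exp_lemma)
  also have "of_nat r * (- (2 * pi * \<i> * of_real (real q / real r))) = (2 * of_int (- int q) * pi) * \<i>"
  proof -
    have h: "(of_nat r :: complex) * of_real (real q / real r) = of_nat q"
      using assms by (simp add: of_real_divide)
    have "of_nat r * (- (2 * pi * \<i> * of_real (real q / real r)))
        = - (2 * pi * \<i>) * ((of_nat r :: complex) * of_real (real q / real r))"
      by (simp add: algebra_simps)
    also have "\<dots> = (2 * of_int (- int q) * pi) * \<i>" unfolding h by simp
    finally show ?thesis .
  qed
  also have "exp \<dots> = 1" by (rule exp_integer_2pi) simp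
  finally show ?thesis .
qed

lemma omega_norm: "cmod (exp (2 * pi * \<i> * of_real t)) = 1"
  by simp

lemma omega_mu: "cnj (exp (2 * pi * \<i> * of_real t)) * exp (2 * pi * \<i> * of_real t) = 1"
proof -
  have "cnj (exp (2 * pi * \<i> * of_real t)) * exp (2 * pi * \<i> * of_real t)
      = complex_of_real ((cmod (exp (2 * pi * \<i> * of_real t)))^2)"
    by (subst complex_norm_square) (rule mult.commute)
  thus ?thesis by (simp only: omega_norm) simp
qed

lemma vsmult_assoc: "(a::complex) *s (b *s x) = (a * b) *s x"
  by (simp add: cvec_eq_iff)

lemma mpow_Suc_right: "mpow A (Suc k) = mpow A k ** A"
  by (induction k) (simp_all add: matrix_mul_assoc)

lemma mpow_comm: "A ** mpow A k = mpow A k ** A"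
  by (metis mpow.simps(2) mpow_Suc_right)

lemma mpow_vec_Suc: "mpow A (Suc j) *v x = A *v (mpow A j *v x)"
  by (simp add: matrix_vector_mul_assoc)

lemma comm_vec:
  assumes "V ** U = cscale \<omega> (U ** V)" "cnj \<omega> * \<omega> = 1"
  shows "U *v (V *v y) = cnj \<omega> *s (V *v (U *v y))"
proof -
  have "V *v (U *v y) = \<omega> *s (U *v (V *v y))"
    by (simp add: matrix_vector_mul_assoc assms(1) cscale_mult_vec)
  hence "cnj \<omega> *s (V *v (U *v y)) = (cnj \<omega> * \<omega>) *s (U *v (V *v y))" by (simp add: vsmult_assoc)
  thus ?thesis using assms(2) by simp
qed

lemma comm_vec_pow:
  assumes "V ** U = cscale \<omega> (U ** V)" "cnj \<omega> * \<omega> = 1"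
  shows "U *v (mpow V j *v y) = (cnj \<omega>)^j *s (mpow V j *v (U *v y))"
proof (induction j)
  case 0 then show ?case by simp
next
  case (Suc j)
  have "U *v (mpow V (Suc j) *v y) = cnj \<omega> *s (V *v (U *v (mpow V j *v y)))"
    by (simp add: matrix_vector_mul_assoc[symmetric] comm_vec[OF assms])
  also have "\<dots> = (cnj \<omega>)^(Suc j) *s (mpow V (Suc j) *v (U *v y))"
    by (simp add: Suc mult_vec_scale vsmult_assoc matrix_vector_mul_assoc[symmetric])
  finally show ?case .
qed

lemma mpow_cinner:
  assumes "unitary_map V"
  shows "cinner (mpow V j *v y) (mpow V j *v z) = cinner y z"
  by (induction j) (simp_all add: matrix_vector_mul_assoc[symmetric] unitary_cinner[OF assms])

lemma norm1_eig:
  assumes "cinner (A *v x) (A *v x) = cinner x x" "A *v x = c *s x" "x \<noteq> 0"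
  shows "cmod c = 1"
proof -
  have "cinner (A *v x) (A *v x) = c * (cnj c * cinner x x)"
    using assms(2) by (simp only: cinner_scale_left cinner_scale_right)
  hence h: "(cnj c * c) * cinner x x = 1 * cinner x x" using assms(1) by (simp add: mult_ac)
  have "cinner x x \<noteq> 0" using assms(3) by (simp add: cinner_self)
  hence "cnj c * c = 1" using h by (metis mult_cancel_right)
  hence "complex_of_real ((cmod c)^2) = 1" by (metis complex_norm_square mult.commute)
  hence "(cmod c)^2 = 1" by (metis of_real_eq_1_iff)
  thus ?thesis using norm_ge_zero[of c] by (auto simp: power2_eq_1_iff)
qed

lemma schur_scalar:
  assumes irr: "irreducible_rep \<theta> U V"
    and cU: "C ** U = U ** C" and cV: "C ** V = V ** C"
  shows "\<exists>b. \<forall>y. C *v y = b *s y"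
proof -
  obtain b y0 where y0: "y0 \<noteq> 0" "C *v y0 = b *s y0" by (rule eigen_exists)
  define S where "S = {y. C *v y = b *s y}"
  have "csubspace S" unfolding csubspace_def S_def
    by (auto simp: mult_vec_add mult_vec_zero mult_vec_scale vsmult_assoc mult.commute
        vector_add_ldistrib)
  moreover have "\<forall>x\<in>S. U *v x \<in> S \<and> V *v x \<in> S"
  proof (intro ballI conjI)
    fix x assume "x \<in> S"
    hence x: "C *v x = b *s x" unfolding S_def by simp
    have "C *v (U *v x) = U *v (C *v x)" by (simp add: matrix_vector_mul_assoc cU)
    thus "U *v x \<in> S" unfolding S_def by (simp add: x mult_vec_scale)
    have "C *v (V *v x) = V *v (C *v x)" by (simp add: matrix_vector_mul_assoc cV)
    thus "V *v x \<in> S" unfolding S_def by (simp add: x mult_vec_scale)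
  qed
  ultimately have "S = {0} \<or> S = UNIV" using irr unfolding irreducible_rep_def by blast
  moreover have "y0 \<in> S" using y0 unfolding S_def by simp
  ultimately have "S = UNIV" using y0 by auto
  thus ?thesis unfolding S_def by auto
qed



lemma smult_sum: "(a::complex) *s (\<Sum>j\<in>S. f j) = (\<Sum>j\<in>S. a *s f j)"
  by (simp add: cvec_eq_iff sum_component sum_distrib_left)

lemma cnj_mult_norm1: "cmod c = 1 \<Longrightarrow> cnj c * c = 1"
  by (metis complex_norm_square mult.commute of_real_1 power_one)

lemma rep_structure:
  fixes q r :: nat and U V :: "complex^'n^'n"
  assumes r0: "r > 0" and cop: "coprime q r" and irr: "irreducible_rep (real q / real r) U V"
  obtains x lam b where "onb r (\<lambda>j. mpow V j *v x)"
    "\<And>j. U *v (mpow V j *v x) = (lam * (cnj (exp (2 * pi * \<i> * of_real (real q / real r))))^j) *s (mpow V j *v x)"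
    "mpow V r *v x = b *s x" "cmod b = 1" "cmod lam = 1"
proof -
  define \<omega> where "\<omega> = exp (2 * pi * \<i> * of_real (real q / real r))"
  define \<mu> where "\<mu> = cnj \<omega>"
  have uU: "unitary_map U" and uV: "unitary_map V" and VU: "V ** U = cscale \<omega> (U ** V)"
    using irr unfolding irreducible_rep_def is_rep_def \<omega>_def by auto
  have om: "cnj \<omega> * \<omega> = 1" unfolding \<omega>_def by (rule omega_mu)
  have mr: "\<mu>^r = 1" unfolding \<mu>_def \<omega>_def by (rule mu_pow_r[OF r0])
  have mk: "\<mu>^k = 1 \<longleftrightarrow> k = 0" if "k < r" for k
    unfolding \<mu>_def \<omega>_def by (rule mu_pow[OF r0 cop that])
  have cU: "mpow V r ** U = U ** mpow V r"
  proof (subst matrix_eq, rule allI)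
    fix y
    show "(mpow V r ** U) *v y = (U ** mpow V r) *v y"
      using comm_vec_pow[OF VU om, of r y] mr
      by (simp add: matrix_vector_mul_assoc[symmetric] \<mu>_def)
  qed
  have cV: "mpow V r ** V = V ** mpow V r" by (rule mpow_comm[symmetric])
  obtain b where b: "\<And>y. mpow V r *v y = b *s y" using schur_scalar[OF irr cU cV] by blast
  obtain lam x0 where x0: "x0 \<noteq> 0" "U *v x0 = lam *s x0" by (rule eigen_exists)
  define x where "x = (1 / complex_of_real (norm x0)) *s x0"
  have Ux: "U *v x = lam *s x" unfolding x_def
    by (simp add: mult_vec_scale x0 vsmult_assoc mult.commute)
  have nx0: "norm x0 \<noteq> 0" using x0 by simp
  have "cinner x x = (1 / complex_of_real (norm x0)) * (cnj (1 / complex_of_real (norm x0)) * cinner x0 x0)"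
    unfolding x_def by (simp only: cinner_scale_left cinner_scale_right)
  also have "\<dots> = 1" using nx0 by (simp add: cinner_self power2_eq_square)
  finally have xx: "cinner x x = 1" .
  hence xn0: "x \<noteq> 0" by (auto simp: cinner_zero_right)
  have lam1: "cmod lam = 1" by (rule norm1_eig[OF unitary_cinner[OF uU] Ux xn0])
  have b1: "cmod b = 1" by (rule norm1_eig[OF mpow_cinner[OF uV] b xn0])
  define e where "e = (\<lambda>j. mpow V j *v x)"
  have eig: "U *v e j = (lam * \<mu>^j) *s e j" for j
    unfolding e_def using comm_vec_pow[OF VU om, of j x]
    by (simp add: Ux mult_vec_scale vsmult_assoc \<mu>_def mult.commute)
  have ll: "cnj lam * lam = 1" by (rule cnj_mult_norm1[OF lam1])
  have mm: "cnj \<mu> * \<mu> = 1" unfolding \<mu>_def using om by (simp add: mult.commute)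
  have orth_lt: "cinner (e i) (e j) = 0" if "i < j" "j < r" for i j
  proof -
    define d where "d = j - i"
    have j: "j = i + d" and d0: "d \<noteq> 0" and dr: "d < r" using that unfolding d_def by auto
    have "cinner (e i) (e j) = cinner (U *v e i) (U *v e j)" by (rule unitary_cinner[OF uU, symmetric])
    also have "\<dots> = (cnj lam * lam) * ((cnj \<mu> * \<mu>)^i) * \<mu>^d * cinner (e i) (e j)"
    proof -
      have "cnj (lam * \<mu>^i) * (lam * \<mu>^j) = (cnj lam * lam) * ((cnj \<mu> * \<mu>)^i) * \<mu>^d"
        unfolding j by (simp add: power_add power_mult_distrib mult_ac)
      moreover have "cinner (U *v e i) (U *v e j) = (cnj (lam * \<mu>^i) * (lam * \<mu>^j)) * cinner (e i) (e j)"
        by (simp add: eig cinner_scale_left cinner_scale_right mult_ac)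
      ultimately show ?thesis by simp
    qed
    also have "\<dots> = \<mu>^d * cinner (e i) (e j)" by (simp add: ll mm)
    finally have "(\<mu>^d - 1) * cinner (e i) (e j) = 0" by (simp add: algebra_simps)
    moreover have "\<mu>^d \<noteq> 1" using mk[OF dr] d0 by simp
    ultimately show ?thesis by simp
  qed
  have orth: "cinner (e i) (e j) = (if i = j then 1 else 0)" if "i < r" "j < r" for i j
  proof -
    consider "i = j" | "i < j" | "j < i" by linarith
    thus ?thesis
    proof cases
      case 1 thus ?thesis unfolding e_def using xx by (simp add: mpow_cinner[OF uV])
    next
      case 2 thus ?thesis using orth_lt that by simp
    next
      case 3 thus ?thesis using orth_lt[OF 3 that(1)] cinner_cnj[of "e i" "e j"] by simp
    qed
  qed
  obtain r' where r': "r = Suc r'" using r0 by (cases r) auto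
  define S where "S = {y. \<exists>c. y = (\<Sum>j<r. c j *s e j)}"
  have "csubspace S" unfolding csubspace_def S_def
  proof (intro conjI ballI allI)
    show "0 \<in> {y. \<exists>c. y = (\<Sum>j<r. c j *s e j)}"
      by (intro CollectI exI[of _ "\<lambda>_. 0"]) simp
  next
    fix y z assume "y \<in> {y. \<exists>c. y = (\<Sum>j<r. c j *s e j)}" "z \<in> {y. \<exists>c. y = (\<Sum>j<r. c j *s e j)}"
    then obtain c d where "y = (\<Sum>j<r. c j *s e j)" "z = (\<Sum>j<r. d j *s e j)" by auto
    thus "y + z \<in> {y. \<exists>c. y = (\<Sum>j<r. c j *s e j)}"
      by (intro CollectI exI[of _ "\<lambda>j. c j + d j"]) (simp add: vector_sadd_rdistrib sum.distrib)
  next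
    fix a :: complex and y assume "y \<in> {y. \<exists>c. y = (\<Sum>j<r. c j *s e j)}"
    then obtain c where "y = (\<Sum>j<r. c j *s e j)" by auto
    thus "a *s y \<in> {y. \<exists>c. y = (\<Sum>j<r. c j *s e j)}"
      by (intro CollectI exI[of _ "\<lambda>j. a * c j"]) (simp add: smult_sum vsmult_assoc)
  qed
  moreover have "\<forall>y\<in>S. U *v y \<in> S \<and> V *v y \<in> S"
  proof
    fix y assume "y \<in> S"
    then obtain c where c: "y = (\<Sum>j<r. c j *s e j)" unfolding S_def by auto
    have "U *v y = (\<Sum>j<r. (c j * (lam * \<mu>^j)) *s e j)"
      unfolding c by (simp add: mult_vec_sum mult_vec_scale eig vsmult_assoc)
    hence US: "U *v y \<in> S" unfolding S_def by (intro CollectI exI[of _ "\<lambda>j. c j * (lam * \<mu>^j)"])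
    have "V *v y = (\<Sum>j<r. c j *s e (Suc j))"
      unfolding c by (simp add: mult_vec_sum mult_vec_scale e_def matrix_vector_mul_assoc)
    also have "\<dots> = (\<Sum>j<r'. c j *s e (Suc j)) + c r' *s e (Suc r')" by (simp only: r' sum.lessThan_Suc)
    also have "e (Suc r') = b *s e 0" unfolding e_def by (simp only: r'[symmetric] b mpow.simps(1) matrix_vector_mul_lid)
    also have "(\<Sum>j<r'. c j *s e (Suc j)) + c r' *s (b *s e 0)
        = (\<Sum>j<r. (if j = 0 then c r' * b else c (j - 1)) *s e j)"
      unfolding r' sum.lessThan_Suc_shift by (subst add.commute) (simp add: vsmult_assoc mult.commute)
    finally have "V *v y \<in> S" unfolding S_def
      by (intro CollectI exI[of _ "\<lambda>j. if j = 0 then c r' * b else c (j - 1)"])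
    with US show "U *v y \<in> S \<and> V *v y \<in> S" by blast
  qed
  ultimately have "S = {0} \<or> S = UNIV" using irr unfolding irreducible_rep_def by blast
  moreover have "x \<in> S"
  proof -
    have "(\<Sum>j<r. (if j = 0 then 1 else 0) *s e j) = e 0" unfolding r' sum.lessThan_Suc_shift by simp
    moreover have "e 0 = x" unfolding e_def by simp
    ultimately show ?thesis unfolding S_def by (intro CollectI exI[of _ "\<lambda>j. if j = 0 then 1 else 0"]) simp
  qed
  ultimately have "S = UNIV" using xn0 by blast
  hence "\<forall>y. \<exists>c. y = (\<Sum>j<r. c j *s e j)" unfolding S_def by blast
  hence "onb r e" unfolding onb_def using orth by blast
  hence onbx: "onb r (\<lambda>j. mpow V j *v x)" unfolding e_def .
  have eig2: "\<And>j. U *v (mpow V j *v x) = (lam * (cnj (exp (2 * pi * \<i> * of_real (real q / real r))))^j) *s (mpow V j *v x)"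
    using eig unfolding e_def \<mu>_def \<omega>_def .
  show ?thesis by (rule that[OF onbx eig2 b b1 lam1])
qed

lemma unit_root:
  assumes "cmod c = 1" "r > 0"
  shows "\<exists>t. cmod t = 1 \<and> t^r = c"
proof -
  have c0: "c \<noteq> 0" using assms by auto
  define t where "t = exp (Ln c / of_nat r)"
  have "t^r = exp (of_nat r * (Ln c / of_nat r))" unfolding t_def by (rule exp_of_nat_mult[symmetric])
  also have "\<dots> = c" using assms(2) c0 by simp
  finally have "t^r = c" .
  moreover have "cmod t = 1" unfolding t_def using c0 assms by simp
  ultimately show ?thesis by blast
qed

lemma unit_exp:
  assumes "cmod s = 1" shows "\<exists>a. s = exp (\<i> * of_real a)"
proof -
  have s0: "s \<noteq> 0" using assms by auto
  have "Ln s = \<i> * of_real (Im (Ln s))" using s0 assms by (simp add: complex_eq_iff)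
  hence "s = exp (\<i> * of_real (Im (Ln s)))" using s0 by (metis exp_Ln)
  thus ?thesis by blast
qed

lemma equiv_twist:
  fixes q r :: nat and U V :: "complex^'n^'n" and U1 V1 :: "complex^'m^'m"
  assumes r0: "r > 0" and cop: "coprime q r"
    and irr: "irreducible_rep (real q / real r) U V"
    and irr1: "irreducible_rep (real q / real r) U1 V1"
  shows "\<exists>s t. cmod s = 1 \<and> cmod t = 1 \<and> unit_equiv (cscale s U) (cscale t V) U1 V1"
proof -
  define \<mu> where "\<mu> = cnj (exp (2 * pi * \<i> * of_real (real q / real r)))"
  obtain x lam b where onb: "onb r (\<lambda>j. mpow V j *v x)"
    and eig: "\<And>j. U *v (mpow V j *v x) = (lam * \<mu>^j) *s (mpow V j *v x)"
    and b: "mpow V r *v x = b *s x" and b1: "cmod b = 1" and lam1: "cmod lam = 1"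
    using rep_structure[OF r0 cop irr] unfolding \<mu>_def by metis
  obtain x' lam' b' where onb': "onb r (\<lambda>j. mpow V1 j *v x')"
    and eig': "\<And>j. U1 *v (mpow V1 j *v x') = (lam' * \<mu>^j) *s (mpow V1 j *v x')"
    and b': "mpow V1 r *v x' = b' *s x'" and b1': "cmod b' = 1" and lam1': "cmod lam' = 1"
    using rep_structure[OF r0 cop irr1] unfolding \<mu>_def by metis
  define e where "e = (\<lambda>j. mpow V j *v x)"
  define e' where "e' = (\<lambda>j. mpow V1 j *v x')"
  have b0: "b \<noteq> 0" and lam0: "lam \<noteq> 0" using b1 lam1 by auto
  obtain t where t1: "cmod t = 1" and tr: "t^r = b' / b"
    using unit_root[of "b' / b" r] r0 b1 b1' by (auto simp: norm_divide)
  have t0: "t \<noteq> 0" using t1 by auto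
  define s where "s = lam' / lam"
  have s1: "cmod s = 1" unfolding s_def using lam1 lam1' by (simp add: norm_divide)
  define f where "f = (\<lambda>j. (inverse t)^j *s e' j)"
  have itt: "cnj (inverse t) * inverse t = 1"
    using cnj_mult_norm1[of "inverse t"] t1 by (simp add: norm_inverse)
  have itj: "cnj ((inverse t)^j) * (inverse t)^j = 1" for j
    by (simp only: complex_cnj_power power_mult_distrib[symmetric] itt power_one)
  have onbf: "onb r f"
    unfolding onb_def
  proof (intro conjI allI impI)
    fix i j assume ij: "i < r" "j < r"
    have "cinner (f i) (f j) = cnj ((inverse t)^i) * (inverse t)^j * cinner (e' i) (e' j)"
      unfolding f_def by (simp add: cinner_scale_left cinner_scale_right mult.assoc)
    also have "\<dots> = (if i = j then 1 else 0)"
    proof -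
      have ce: "cinner (e' i) (e' j) = (if i = j then 1 else 0)"
        using onb' ij unfolding onb_def e'_def by blast
      show ?thesis using ce itj[of j] by (cases "i = j") simp_all
    qed
    finally show "cinner (f i) (f j) = (if i = j then 1 else 0)" .
  next
    fix y
    obtain c where c: "y = (\<Sum>j<r. c j *s e' j)" using onb' unfolding onb_def e'_def by blast
    have "y = (\<Sum>j<r. (c j * t^j) *s f j)" unfolding c f_def
      by (rule sum.cong) (simp_all add: vsmult_assoc t0 power_inverse[symmetric]
           field_simps)
    thus "\<exists>c. y = (\<Sum>j<r. c j *s f j)" by (rule exI[of _ "\<lambda>j. c j * t^j"])
  qed
  have onbe: "onb r e" using onb unfolding e_def .
  define W where "W = outer r f e"
  have uW: "unitary_map W" unfolding W_def by (rule outer_unitary[OF onbe onbf])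
  have We: "W *v e k = f k" if "k < r" for k unfolding W_def by (rule outer_basis[OF onbe that])
  have eU: "U *v e j = (lam * \<mu>^j) *s e j" for j unfolding e_def by (rule eig)
  have eU': "U1 *v e' j = (lam' * \<mu>^j) *s e' j" for j unfolding e'_def by (rule eig')
  have "W ** cscale s U = U1 ** W"
  proof (rule onb_matrix_eq[OF onbe])
    fix k assume k: "k < r"
    have "(W ** cscale s U) *v e k = (s * (lam * \<mu>^k)) *s f k"
      by (simp add: matrix_vector_mul_assoc[symmetric] cscale_mult_vec eU mult_vec_scale We k vsmult_assoc)
    also have "\<dots> = (lam' * \<mu>^k) *s f k" unfolding s_def using lam0 by simp
    also have "\<dots> = (U1 ** W) *v e k"
      by (simp add: matrix_vector_mul_assoc[symmetric] We k f_def mult_vec_scale eU' vsmult_assoc mult.commute)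
    finally show "(W ** cscale s U) *v e k = (U1 ** W) *v e k" .
  qed
  hence UU: "U1 = W ** cscale s U ** cadj W" by (rule conj_intertwine[OF uW])
  have "W ** cscale t V = V1 ** W"
  proof (rule onb_matrix_eq[OF onbe])
    fix k assume k: "k < r"
    have V1f: "V1 *v f k = (inverse t)^k *s e' (Suc k)"
      by (simp add: f_def e'_def mult_vec_scale matrix_vector_mul_assoc)
    have Ve: "V *v e k = e (Suc k)" by (simp add: e_def matrix_vector_mul_assoc)
    show "(W ** cscale t V) *v e k = (V1 ** W) *v e k"
    proof (cases "Suc k < r")
      case True
      have "(W ** cscale t V) *v e k = t *s f (Suc k)"
        by (simp add: matrix_vector_mul_assoc[symmetric] cscale_mult_vec Ve mult_vec_scale We True)
      also have "\<dots> = (inverse t)^k *s e' (Suc k)"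
        unfolding f_def using t0 by (simp add: vsmult_assoc)
      also have "\<dots> = (V1 ** W) *v e k"
        by (simp add: matrix_vector_mul_assoc[symmetric] We k V1f)
      finally show ?thesis .
    next
      case False
      hence rk: "r = Suc k" using k by simp
      have er: "e (Suc k) = b *s e 0" using b unfolding e_def rk by simp
      have er': "e' (Suc k) = b' *s e' 0" using b' unfolding e'_def rk by simp
      have "(W ** cscale t V) *v e k = (t * b) *s f 0"
        by (simp add: matrix_vector_mul_assoc[symmetric] cscale_mult_vec Ve er mult_vec_scale We r0 vsmult_assoc)
      also have "\<dots> = ((inverse t)^k * b') *s e' 0"
      proof -
        have "t^(Suc k) * b = b'" using tr rk b0 by simp
        hence "t * b = (inverse t)^k * b'" using t0
          by (simp add: field_simps power_inverse)
        thus ?thesis unfolding f_def by simp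
      qed
      also have "\<dots> = (V1 ** W) *v e k"
        by (simp add: matrix_vector_mul_assoc[symmetric] We k V1f er' vsmult_assoc)
      finally show ?thesis .
    qed
  qed
  hence VV: "V1 = W ** cscale t V ** cadj W" by (rule conj_intertwine[OF uW])
  have "unit_equiv (cscale s U) (cscale t V) U1 V1"
    unfolding unit_equiv_def using uW UU VV by blast
  thus ?thesis using s1 t1 by blast
qed

lemma mpow_conj:
  assumes "unitary_map W"
  shows "mpow (W ** A ** cadj W) k = W ** mpow A k ** cadj W"
proof (induction k)
  case 0 thus ?case using assms by (simp add: unitary_map_def)
next
  case (Suc k)
  have "mpow (W ** A ** cadj W) (Suc k) = (W ** A ** cadj W) ** (W ** mpow A k ** cadj W)"
    by (simp add: Suc)
  also have "\<dots> = W ** A ** (cadj W ** W) ** mpow A k ** cadj W" by (simp add: matrix_mul_assoc)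
  also have "\<dots> = W ** mpow A (Suc k) ** cadj W"
    using assms by (simp add: unitary_map_def matrix_mul_assoc)
  finally show ?case .
qed

lemma mpow_cscale: "mpow (cscale c A) k = cscale (c^k) (mpow A k)"
  by (induction k) (simp_all add: cscale_one cscale_mult_left cscale_mult_right cscale_cscale mult.commute)

lemma unitary_inv: "unitary_map A \<Longrightarrow> matrix_inv A = cadj A"
proof -
  assume u: "unitary_map A"
  have "\<exists>A'. A ** A' = mat 1 \<and> A' ** A = mat 1" using u unfolding unitary_map_def by blast
  hence P: "A ** matrix_inv A = mat 1 \<and> matrix_inv A ** A = mat 1"
    unfolding matrix_inv_def by (rule someI_ex)
  have "matrix_inv A = matrix_inv A ** (A ** cadj A)" using u by (simp add: unitary_map_def)
  also have "\<dots> = (matrix_inv A ** A) ** cadj A" by (simp add: matrix_mul_assoc)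
  also have "\<dots> = cadj A" using P by simp
  finally show ?thesis .
qed

lemma unitary_cadj: "unitary_map A \<Longrightarrow> unitary_map (cadj A)"
  by (simp add: unitary_map_def cadj_cadj)

lemma mult_cnj_norm1: "cmod s = 1 \<Longrightarrow> s * cnj s = 1"
  using cnj_mult_norm1[of s] by (simp add: mult.commute)

lemma cnj_inverse_norm1: "cmod s = 1 \<Longrightarrow> cnj s = inverse s"
  using inverse_unique[OF mult_cnj_norm1[of s]] by simp

lemma unitary_cscale: "cmod s = 1 \<Longrightarrow> unitary_map A \<Longrightarrow> unitary_map (cscale s A)"
  unfolding unitary_map_def
  by (simp add: cadj_cscale cscale_mult_left cscale_mult_right cscale_cscale cscale_one
      cnj_mult_norm1 mult_cnj_norm1)

lemma unitary_conj:
  assumes "unitary_map W" "unitary_map A" shows "unitary_map (W ** A ** cadj W)"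
proof -
  have 1: "W ** cadj W = mat 1" "cadj W ** W = mat 1" "A ** cadj A = mat 1" "cadj A ** A = mat 1"
    using assms by (auto simp: unitary_map_def)
  have "(W ** A ** cadj W) ** cadj (W ** A ** cadj W) = W ** A ** (cadj W ** W) ** cadj A ** cadj W"
    by (simp add: cadj_mult cadj_cadj matrix_mul_assoc)
  also have "\<dots> = mat 1" by (simp add: 1 matrix_mul_assoc[symmetric]; simp add: matrix_mul_assoc 1)
  finally have a: "(W ** A ** cadj W) ** cadj (W ** A ** cadj W) = mat 1" .
  have "cadj (W ** A ** cadj W) ** (W ** A ** cadj W) = W ** cadj A ** (cadj W ** W) ** A ** cadj W"
    by (simp add: cadj_mult cadj_cadj matrix_mul_assoc)
  also have "\<dots> = mat 1" by (simp add: 1 matrix_mul_assoc[symmetric]; simp add: matrix_mul_assoc 1)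
  finally show ?thesis using a unfolding unitary_map_def by blast
qed

lemma mpow_int_conj:
  assumes "unitary_map W" "unitary_map A"
  shows "mpow_int (W ** A ** cadj W) k = W ** mpow_int A k ** cadj W"
proof (cases "0 \<le> k")
  case True thus ?thesis by (simp add: mpow_int_def mpow_conj[OF assms(1)])
next
  case False
  have "matrix_inv (W ** A ** cadj W) = W ** matrix_inv A ** cadj W"
    using unitary_inv[OF unitary_conj[OF assms]] unitary_inv[OF assms(2)]
    by (simp add: cadj_mult cadj_cadj matrix_mul_assoc)
  thus ?thesis using False by (simp add: mpow_int_def mpow_conj[OF assms(1)])
qed

lemma mpow_int_cscale:
  assumes "cmod s = 1" "unitary_map A"
  shows "mpow_int (cscale s A) k = cscale (s powi k) (mpow_int A k)"
proof (cases "0 \<le> k")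
  case True thus ?thesis by (simp add: mpow_int_def mpow_cscale power_int_def)
next
  case False
  have "matrix_inv (cscale s A) = cscale (inverse s) (matrix_inv A)"
    using unitary_inv[OF unitary_cscale[OF assms]] unitary_inv[OF assms(2)] assms(1)
    by (simp add: cadj_cscale cnj_inverse_norm1)
  thus ?thesis using False by (simp add: mpow_int_def mpow_cscale power_int_def)
qed

lemma conj_cscale: "W ** cscale c A ** V = cscale c (W ** A ** V)"
  by (simp add: cscale_mult_left cscale_mult_right)

lemma conj_prod:
  assumes "unitary_map W"
  shows "(W ** P ** cadj W) ** (W ** Q ** cadj W) = W ** (P ** Q) ** cadj W"
proof -
  have "(W ** P ** cadj W) ** (W ** Q ** cadj W) = W ** P ** (cadj W ** W) ** Q ** cadj W"
    by (simp add: matrix_mul_assoc)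
  also have "\<dots> = W ** (P ** Q) ** cadj W"
    using assms by (simp add: unitary_map_def matrix_mul_assoc)
  finally show ?thesis .
qed

definition Jsc :: "real \<Rightarrow> complex \<Rightarrow> int \<Rightarrow> int \<Rightarrow> complex \<Rightarrow> complex" where
  "Jsc \<theta> \<tau> n m z =
     (let \<gamma> = of_int n + \<tau> * of_int m; \<alpha> = pi * \<theta> / Im \<tau> in
      exp (of_real \<alpha> * (z * cnj \<gamma> + of_real ((cmod \<gamma>)\<^sup>2 / 2)))
              * exp (of_real (pi * \<theta>) * \<i> * of_int n * of_int m))"

lemma Jfac_form: "Jfac \<theta> \<tau> A B n m z = cscale (Jsc \<theta> \<tau> n m z) (mpow_int A (- n) ** mpow_int B (- m))"
  unfolding Jfac_def Jsc_def Let_def by simp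

lemma ring_aux: "-(N::complex) * (I * A) + - M * (I * C) + I * -(A * X + C * Y) = I * -(A * (X + N) + C * (Y + M))"
  by (simp add: algebra_simps)

lemma bundle_from_equiv:
  fixes U1 V1 :: "complex^'m^'m" and U2 V2 :: "complex^'k^'k"
  assumes tau: "Im \<tau> > 0" and s1: "cmod s = 1" and t1: "cmod t = 1"
    and uU1: "unitary_map U1" and uV1: "unitary_map V1"
    and eq: "unit_equiv (cscale s U1) (cscale t V1) U2 V2"
  shows "bundle_iso \<theta> \<tau> U1 V1 U2 V2"
proof -
  obtain W :: "complex^'m^'k" where uW: "unitary_map W"
    and U2: "U2 = W ** cscale s U1 ** cadj W" and V2: "V2 = W ** cscale t V1 ** cadj W"
    using eq unfolding unit_equiv_def by blast
  obtain a where a: "s = exp (\<i> * of_real a)" using unit_exp[OF s1] by blast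
  obtain c where c: "t = exp (\<i> * of_real c)" using unit_exp[OF t1] by blast
  define Y where "Y = (\<lambda>z::complex. Im z / Im \<tau>)"
  define X where "X = (\<lambda>z::complex. Re z - Re \<tau> * Y z)"
  define \<phi> where "\<phi> = (\<lambda>z. exp (\<i> * of_real (- (a * X z + c * Y z))))"
  define \<Phi> where "\<Phi> = (\<lambda>z. cscale (\<phi> z) W)"
  have tau0: "Im \<tau> \<noteq> 0" using tau by simp
  have XY: "X (z + of_int n + \<tau> * of_int m) = X z + of_int n" "Y (z + of_int n + \<tau> * of_int m) = Y z + of_int m"
    for z n m
    unfolding X_def Y_def using tau0 by (simp_all add: field_simps)
  have phi_shift: "\<phi> (z + of_int n + \<tau> * of_int m) = s powi (- n) * t powi (- m) * \<phi> z" for z n m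
  proof -
    have "s powi (- n) * t powi (- m) * \<phi> z
        = exp (of_int (- n) * (\<i> * of_real a) + of_int (- m) * (\<i> * of_real c) + \<i> * of_real (- (a * X z + c * Y z)))"
      unfolding a c \<phi>_def exp_power_int by (simp only: exp_add)
    also have "\<dots> = \<phi> (z + of_int n + \<tau> * of_int m)"
      unfolding \<phi>_def XY
      by (rule arg_cong[where f=exp]) (simp only: of_real_add of_real_mult of_real_minus of_real_of_int_eq of_int_minus, rule ring_aux)
    finally show ?thesis by simp
  qed
  have cont: "continuous_on UNIV \<Phi>"
    unfolding \<Phi>_def cscale_def \<phi>_def X_def Y_def
    by (intro continuous_on_vec_lambda continuous_intros) (simp_all add: tau0)
  have inv: "invertible (\<Phi> z)" for z
  proof -
    have p0: "\<phi> z \<noteq> 0" unfolding \<phi>_def by simp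
    have "\<Phi> z ** cscale (inverse (\<phi> z)) (cadj W) = mat 1"
      "cscale (inverse (\<phi> z)) (cadj W) ** \<Phi> z = mat 1"
      using uW p0 unfolding \<Phi>_def unitary_map_def
      by (simp_all add: cscale_mult_left cscale_mult_right cscale_cscale cscale_one)
    thus ?thesis unfolding invertible_def by blast
  qed
  have J: "\<Phi> (z + of_int n + \<tau> * of_int m) ** Jfac \<theta> \<tau> U1 V1 n m z = Jfac \<theta> \<tau> U2 V2 n m z ** \<Phi> z"
    for n m z
  proof -
    define P where "P = mpow_int U1 (- n) ** mpow_int V1 (- m)"
    define K where "K = Jsc \<theta> \<tau> n m z"
    define \<sigma> where "\<sigma> = s powi (- n) * t powi (- m)"
    have P2: "mpow_int U2 (- n) ** mpow_int V2 (- m) = cscale \<sigma> (W ** P ** cadj W)"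
    proof -
      have u: "mpow_int U2 (- n) = cscale (s powi (- n)) (W ** mpow_int U1 (- n) ** cadj W)"
        unfolding U2 by (subst mpow_int_conj[OF uW unitary_cscale[OF s1 uU1]],
          subst mpow_int_cscale[OF s1 uU1], rule conj_cscale)
      have v: "mpow_int V2 (- m) = cscale (t powi (- m)) (W ** mpow_int V1 (- m) ** cadj W)"
        unfolding V2 by (subst mpow_int_conj[OF uW unitary_cscale[OF t1 uV1]],
          subst mpow_int_cscale[OF t1 uV1], rule conj_cscale)
      show ?thesis unfolding u v \<sigma>_def P_def
        by (simp only: cscale_mult_left cscale_mult_right cscale_cscale conj_prod[OF uW] mult.commute)
    qed
    have "\<Phi> (z + of_int n + \<tau> * of_int m) ** Jfac \<theta> \<tau> U1 V1 n m z = cscale (\<sigma> * \<phi> z * K) (W ** P)"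
      unfolding Jfac_form \<Phi>_def phi_shift P_def K_def \<sigma>_def
      by (simp add: cscale_mult_left cscale_mult_right cscale_cscale mult_ac)
    also have "\<dots> = cscale K (cscale \<sigma> (W ** P ** cadj W)) ** \<Phi> z"
    proof -
      have "W ** P ** cadj W ** W = W ** P" using uW
        by (simp add: unitary_map_def matrix_mul_assoc[symmetric])
      thus ?thesis unfolding \<Phi>_def
        by (simp add: cscale_mult_left cscale_mult_right cscale_cscale mult_ac)
    qed
    also have "\<dots> = Jfac \<theta> \<tau> U2 V2 n m z ** \<Phi> z"
      unfolding Jfac_form P2 K_def ..
    finally show ?thesis .
  qed
  show ?thesis unfolding bundle_iso_def using cont inv J by blast
qed

theorem corollary3p1:
  fixes q r :: nat and \<theta> :: real and \<tau> :: complex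
    and U V :: "complex^'n^'n"
    and U1 V1 :: "complex^'m^'m"
    and U2 V2 :: "complex^'k^'k"
  assumes "Im \<tau> > 0"
    and "q > 0" and "r > 0" and "coprime q r" and "\<theta> = real q / real r"
    and "irreducible_rep \<theta> U V"
    and "irreducible_rep \<theta> U1 V1"
    and "irreducible_rep \<theta> U2 V2"
  shows "(\<exists>s t. cmod s = 1 \<and> cmod t = 1 \<and> unit_equiv (cscale s U) (cscale t V) U1 V1)
         \<and> bundle_iso \<theta> \<tau> U1 V1 U2 V2"
proof
  show "\<exists>s t. cmod s = 1 \<and> cmod t = 1 \<and> unit_equiv (cscale s U) (cscale t V) U1 V1"
    using equiv_twist[OF assms(3,4)] assms(5,6,7) by blast
  obtain s t where st: "cmod s = 1" "cmod t = 1" "unit_equiv (cscale s U1) (cscale t V1) U2 V2"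
    using equiv_twist[OF assms(3,4)] assms(5,7,8) by blast
  have "unitary_map U1" "unitary_map V1" using assms(7) unfolding irreducible_rep_def is_rep_def by auto
  thus "bundle_iso \<theta> \<tau> U1 V1 U2 V2" using bundle_from_equiv[OF assms(1) st(1,2) _ _ st(3)] by blast
qed

end
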